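(* Let $N\subset\mathbb{R}^d$ be compact and convex, and let $f_n,f:N\to\mathbb{R}$ ($n\in\mathbb{N}$) be convex functions. Extend them to $\mathbb{R}^d$ by $f_{n,N}=f_n+O_N$ and $f_N=f+O_N$. Assume that $f_N^*$ is differentiable on $\mathbb{R}^d$ with $\nabla f_N^*:\mathbb{R}^d\to N$ continuous, and that there is a compact set $M\subset\mathbb{R}^d$ with $\nabla f_N^*(M)=N$. Then $$\sup_{y\in N}|f_n(y)-f(y)|\to0\ \Longrightarrow\ \sup_{x\in\mathbb{R}^d}\ \sup_{y\in\partial f_{n,N}^*(x)}\big\|y-\nabla f_N^*(x)\big\|\to0 .$$
   Context: $O_N(y)=0$ for $y\in N$ and $O_N(y)=+\infty$ otherwise. For $g:\mathbb{R}^d\to\mathbb{R}\cup\{+\infty\}$, the Legendre transform is $g^*(x)=\sup_{y\in\mathbb{R}^d}(\langle x,y\rangle-g(y))$, and $\partial g^*(x)=\{y:\ g^*(z)\ge g^*(x)+\langle y,z-x\rangle\ \forall z\}$ is the convex subdifferential. *)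

theory Defs
  imports "HOL-Analysis.Analysis"
begin

definition ext_ind :: "'a set \<Rightarrow> ('a \<Rightarrow> real) \<Rightarrow> 'a \<Rightarrow> ereal" where
  "ext_ind N g y = (if y \<in> N then ereal (g y) else \<infinity>)"

definition legendre :: "('a::real_inner \<Rightarrow> ereal) \<Rightarrow> 'a \<Rightarrow> ereal" where
  "legendre g x = (SUP y. ereal (inner x y) - g y)"

definition subdiff :: "('a::real_inner \<Rightarrow> ereal) \<Rightarrow> 'a \<Rightarrow> 'a set" where
  "subdiff g x = {y. \<forall>z. g z \<ge> g x + ereal (inner y (z - x))}"

end

theory Submission
  imports Defs
begin

definition esub :: "('a::real_inner \<Rightarrow> real) \<Rightarrow> real \<Rightarrow> 'a \<Rightarrow> 'a \<Rightarrow> bool" where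
  "esub F e x y \<longleftrightarrow> (\<forall>z. F x + inner y (z - x) - e \<le> F z)"

lemma leg_upper:
  assumes "legendre (ext_ind N f) x = ereal c" "y \<in> N"
  shows "inner x y - f y \<le> c"
proof -
  have "ereal (inner x y) - ext_ind N f y \<le> legendre (ext_ind N f) x"
    unfolding legendre_def by (rule SUP_upper) simp
  with assms show ?thesis by (simp add: ext_ind_def)
qed

lemma leg_least:
  assumes "legendre (ext_ind N f) x = ereal c" "\<And>y. y \<in> N \<Longrightarrow> inner x y - f y \<le> d"
  shows "c \<le> d"
proof -
  have "legendre (ext_ind N f) x \<le> ereal d"
    unfolding legendre_def
  proof (rule SUP_least)
    fix y show "ereal (inner x y) - ext_ind N f y \<le> ereal d"
      using assms(2)[of y] by (cases "y \<in> N") (auto simp: ext_ind_def)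
  qed
  with assms show ?thesis by simp
qed

lemma leg_convex:
  assumes "\<And>x. legendre (ext_ind N f) x = ereal (F x)"
  shows "convex_on UNIV F"
proof (rule convex_onI)
  fix t :: real and a b assume t: "t > 0" "t < 1"
  show "F ((1 - t) *\<^sub>R a + t *\<^sub>R b) \<le> (1 - t) * F a + t * F b"
  proof (rule leg_least[OF assms])
    fix y assume y: "y \<in> N"
    have "inner a y - f y \<le> F a" "inner b y - f y \<le> F b"
      using leg_upper[OF assms y] by auto
    hence "(1-t) * (inner a y - f y) + t * (inner b y - f y) \<le> (1 - t) * F a + t * F b"
      using t by (intro add_mono mult_left_mono) auto
    thus "inner ((1 - t) *\<^sub>R a + t *\<^sub>R b) y - f y \<le> (1 - t) * F a + t * F b"
      by (simp add: inner_add_left algebra_simps)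
  qed
qed simp

lemma grad_ineq:
  fixes F :: "'a::euclidean_space \<Rightarrow> real"
  assumes cvx: "convex_on UNIV F" and der: "(F has_derivative (\<lambda>h. inner (G x) h)) (at x)"
  shows "F x + inner (G x) (z - x) \<le> F z"
proof -
  let ?p = "\<lambda>t::real. F (x + t *\<^sub>R (z - x))"
  have c: "convex_on UNIV ?p"
  proof (rule convex_onI)
    fix t :: real and a b assume t: "t > 0" "t < 1"
    have "?p ((1 - t) *\<^sub>R a + t *\<^sub>R b) = F ((1-t) *\<^sub>R (x + a *\<^sub>R (z - x)) + t *\<^sub>R (x + b *\<^sub>R (z - x)))"
      by (simp add: algebra_simps)
    also have "\<dots> \<le> (1 - t) * ?p a + t * ?p b"
      using convex_onD[OF cvx, of t] t by simp
    finally show "?p ((1 - t) *\<^sub>R a + t *\<^sub>R b) \<le> (1 - t) * ?p a + t * ?p b" .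
  qed simp
  have l: "((\<lambda>t::real. x + t *\<^sub>R (z - x)) has_derivative (\<lambda>t. t *\<^sub>R (z - x))) (at 0)"
    by (auto intro!: derivative_eq_intros)
  have der0: "(F has_derivative (\<lambda>h. inner (G x) h)) (at (x + 0 *\<^sub>R (z - x)))"
    using der by simp
  have "(?p has_derivative (\<lambda>t. inner (G x) (t *\<^sub>R (z - x)))) (at 0)"
    using diff_chain_at[OF l der0] by (simp add: o_def)
  hence "(?p has_field_derivative inner (G x) (z - x)) (at 0 within UNIV)"
    unfolding has_field_derivative_def by (simp add: mult.commute[of _ "G x \<bullet> (z - x)"])
  from convex_on_imp_above_tangent[OF c _ _ _ this, of 1]
  show ?thesis by simp
qed

lemma sub_eq_grad:
  fixes F :: "'a::euclidean_space \<Rightarrow> real"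
  assumes der: "(F has_derivative (\<lambda>h. inner g h)) (at x)"
    and sub: "\<And>z. F x + inner u (z - x) \<le> F z"
  shows "u = g"
proof -
  have d: "((\<lambda>z. F z - inner u z) has_derivative (\<lambda>h. inner g h - inner u h)) (at x)"
    using der by (auto intro!: derivative_eq_intros)
  have "eventually (\<lambda>z. F x - inner u x \<le> F z - inner u z) (at x)"
    using sub by (intro always_eventually allI) (auto simp: inner_diff_right algebra_simps)
  from has_derivative_local_min[OF d this]
  have "\<And>h. inner g h - inner u h = 0" by metis
  from this[of "g - u"] have "inner (g - u) (g - u) = 0" by (simp add: inner_diff_left inner_diff_right inner_commute)
  thus ?thesis by simp
qed

lemma K1:
  fixes F :: "'a::euclidean_space \<Rightarrow> real" and G :: "'a \<Rightarrow> 'a"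
  assumes cvx: "convex_on UNIV F" and der: "\<And>x. (F has_derivative (\<lambda>h. inner (G x) h)) (at x)"
    and cG: "continuous_on UNIV G" and GN: "\<And>x. G x \<in> N" and cN: "compact N"
    and cM: "compact M" and d: "\<delta> > 0"
  shows "\<exists>e>0. \<forall>m\<in>M. \<forall>u. esub F e m u \<longrightarrow> norm (u - G m) < \<delta>"
proof (rule ccontr)
  assume "\<not> ?thesis"
  hence H0: "\<forall>e. e \<le> 0 \<or> (\<exists>m\<in>M. \<exists>u. esub F e m u \<and> \<delta> \<le> norm (u - G m))"
    by (auto simp: not_less)
  have H: "\<exists>m u. m \<in> M \<and> esub F e m u \<and> \<delta> \<le> norm (u - G m)" if "e > 0" for e
    using H0[rule_format, of e] that by auto
  have "\<forall>k::nat. \<exists>m u. m \<in> M \<and> esub F (1 / real (Suc k)) m u \<and> \<delta> \<le> norm (u - G m)"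
    using H by simp
  then obtain m u where mu: "\<And>k. m k \<in> M" "\<And>k. esub F (1 / real (Suc k)) (m k) (u k)"
     "\<And>k. \<delta> \<le> norm (u k - G (m k))"
    by metis
  define v where "v k = G (m k) + (\<delta> / norm (u k - G (m k))) *\<^sub>R (u k - G (m k))" for k
  have vn: "norm (v k - G (m k)) = \<delta>" for k
  proof -
    have "norm (u k - G (m k)) > 0" using mu(3)[of k] d by linarith
    thus ?thesis using d by (simp add: v_def)
  qed
  have ve: "esub F (1 / real (Suc k)) (m k) (v k)" for k
    unfolding esub_def
  proof
    fix z
    define s where "s = \<delta> / norm (u k - G (m k))"
    have np: "norm (u k - G (m k)) > 0" using mu(3)[of k] d by linarith
    have s: "0 < s" "s \<le> 1" using mu(3)[of k] d np by (auto simp: s_def divide_le_eq_1)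
    define e where "e = 1 / real (Suc k)"
    have e: "e \<ge> 0" by (simp add: e_def)
    have v: "v k = (1 - s) *\<^sub>R G (m k) + s *\<^sub>R u k"
      by (simp add: v_def s_def algebra_simps)
    have a1: "F (m k) + inner (G (m k)) (z - m k) \<le> F z" by (rule grad_ineq[OF cvx der])
    have a2: "F (m k) + inner (u k) (z - m k) - e \<le> F z" using mu(2)[of k] by (simp add: esub_def e_def)
    have "F (m k) + inner (v k) (z - m k) - e
        = (1 - s) * (F (m k) + inner (G (m k)) (z - m k)) + s * (F (m k) + inner (u k) (z - m k) - e) - (1 - s) * e"
      by (simp add: v inner_add_left algebra_simps)
    also have "\<dots> \<le> (1 - s) * F z + s * F z - 0"
      using s e a1 a2 by (intro diff_mono add_mono mult_left_mono) auto
    finally show "F (m k) + inner (v k) (z - m k) - 1 / real (Suc k) \<le> F z" by (simp add: e_def algebra_simps)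
  qed
  obtain B where B: "\<And>y. y \<in> N \<Longrightarrow> norm y \<le> B"
    using compact_imp_bounded[OF cN] by (auto simp: bounded_iff)
  have vb: "v k \<in> cball (0::'a) (B + \<delta>)" for k
  proof -
    have "norm (v k) \<le> norm (G (m k)) + norm (v k - G (m k))" by (metis norm_triangle_sub add.commute)
    thus ?thesis using B[OF GN, of "m k"] vn[of k] by simp
  qed
  have cT: "compact (M \<times> cball (0::'a) (B + \<delta>))" by (rule compact_Times[OF cM compact_cball])
  have "\<forall>k. (m k, v k) \<in> M \<times> cball (0::'a) (B + \<delta>)" using mu(1) vb by auto
  from cT[unfolded compact_def, rule_format, of "\<lambda>k. (m k, v k)"] this
  obtain l r where l: "l \<in> M \<times> cball (0::'a) (B + \<delta>)" and r: "strict_mono r"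
    and lim: "((\<lambda>k. (m k, v k)) \<circ> r) \<longlonglongrightarrow> l"
    by blast
  obtain m0 u0 where l0: "l = (m0, u0)" by (cases l)
  have hm: "(\<lambda>k. m (r k)) \<longlonglongrightarrow> m0" using tendsto_fst[OF lim] l0 by (simp add: o_def)
  have hv: "(\<lambda>k. v (r k)) \<longlonglongrightarrow> u0" using tendsto_snd[OF lim] l0 by (simp add: o_def)
  have cGm: "isCont G m0" by (metis cG continuous_on_eq_continuous_at open_UNIV UNIV_I)
  have hG: "(\<lambda>k. G (m (r k))) \<longlonglongrightarrow> G m0" by (rule isCont_tendsto_compose[OF cGm hm])
  have "(\<lambda>k. norm (v (r k) - G (m (r k)))) \<longlonglongrightarrow> norm (u0 - G m0)"
    by (intro tendsto_intros hv hG)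
  hence nd: "norm (u0 - G m0) = \<delta>" using vn by (simp add: LIMSEQ_const_iff)
  have cF: "isCont F m0" using der[of m0] by (rule has_derivative_continuous)
  have hF: "(\<lambda>k. F (m (r k))) \<longlonglongrightarrow> F m0" by (rule isCont_tendsto_compose[OF cF hm])
  have he: "(\<lambda>k. 1 / real (Suc (r k))) \<longlonglongrightarrow> 0"
  proof -
    have "(\<lambda>k. 1 / real (Suc k)) \<longlonglongrightarrow> 0" using LIMSEQ_Suc[OF lim_inverse_n'] by simp
    from LIMSEQ_subseq_LIMSEQ[OF this r] show ?thesis by (simp add: o_def)
  qed
  have "F m0 + inner u0 (z - m0) \<le> F z" for z
  proof -
    have "(\<lambda>k. F (m (r k)) + inner (v (r k)) (z - m (r k)) - 1 / real (Suc (r k))) \<longlonglongrightarrow> F m0 + inner u0 (z - m0) - 0"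
      by (intro tendsto_intros hF hv hm he)
    moreover have "\<forall>k. F (m (r k)) + inner (v (r k)) (z - m (r k)) - 1 / real (Suc (r k)) \<le> F z"
      using ve unfolding esub_def by blast
    ultimately show ?thesis by (simp add: LIMSEQ_le_const2)
  qed
  hence "u0 = G m0" by (intro sub_eq_grad[OF der])
  with nd d show False by simp
qed

lemma in_N:
  fixes N :: "'a::euclidean_space set"
  assumes L: "\<And>x. legendre (ext_ind N f) x = ereal (F x)" and cN: "compact N" and cv: "convex N"
    and es: "esub F e x y"
  shows "y \<in> N"
proof (rule ccontr)
  assume "y \<notin> N"
  then obtain a b where ab: "inner a y < b" "\<forall>v\<in>N. inner a v > b"
    using separating_hyperplane_closed_point[OF cv compact_imp_closed[OF cN]] by blast
  have e0: "e \<ge> 0" using es[unfolded esub_def, rule_format, of x] by simp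
  define t where "t = (e + 1) / (b - inner a y)"
  have t0: "t > 0" using e0 ab(1) by (simp add: t_def)
  have tt: "t * (b - inner a y) = e + 1" using ab(1) by (simp add: t_def)
  have up: "F (x - t *\<^sub>R a) \<le> F x - t * b"
  proof (rule leg_least[OF L])
    fix v assume v: "v \<in> N"
    have "inner x v - f v \<le> F x" by (rule leg_upper[OF L v])
    moreover have "t * b \<le> t * inner a v" using ab(2) v t0 by auto
    ultimately show "inner (x - t *\<^sub>R a) v - f v \<le> F x - t * b"
      by (simp add: inner_diff_right inner_commute)
  qed
  have "F x + inner y ((x - t *\<^sub>R a) - x) - e \<le> F (x - t *\<^sub>R a)"
    using es unfolding esub_def by blast
  hence "F x - t * inner a y - e \<le> F (x - t *\<^sub>R a)" by (simp add: inner_commute)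
  with up have "t * (b - inner a y) \<le> e" by (simp add: algebra_simps)
  with tt show False by simp
qed

lemma key:
  fixes F :: "'a::euclidean_space \<Rightarrow> real"
  assumes cvx: "convex_on UNIV F" and der: "\<And>x. (F has_derivative (\<lambda>h. inner (G x) h)) (at x)"
    and GM: "G ` M = N" and cv: "convex N"
    and K: "\<forall>m\<in>M. \<forall>u. esub F e m u \<longrightarrow> norm (u - G m) < \<delta>"
    and es: "esub F e x y" and yN: "y \<in> N" and GN: "G x \<in> N"
  shows "norm (y - G x) < 2 * \<delta>"
proof -
  define w where "w = G x"
  define p where "p = (1/2) *\<^sub>R w + (1/2) *\<^sub>R y"
  have "p \<in> N" using convexD[OF cv GN yN, of "1/2" "1/2"] by (simp add: p_def w_def)
  then obtain m where m: "m \<in> M" "G m = p" using GM by auto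
  have "esub F e m w" unfolding esub_def
  proof
    fix z
    have a1: "F x + inner w (z - x) \<le> F z" unfolding w_def by (rule grad_ineq[OF cvx der])
    have a2: "F x + inner y (m - x) - e \<le> F m" using es by (simp add: esub_def)
    have a3: "F m + inner p (x - m) \<le> F x" using grad_ineq[where F=F and G=G and x=m and z=x, OF cvx der] m(2) by simp
    show "F m + inner w (z - m) - e \<le> F z"
    proof -
      have a3': "F m + (1/2) * (inner w x - inner w m) + (1/2) * (inner y x - inner y m) \<le> F x"
        using a3 by (simp add: p_def inner_diff_left inner_add_right algebra_simps)
      have "inner w (z - x) = inner w z - inner w x" "inner y (m - x) = inner y m - inner y x"
        "inner w (z - m) = inner w z - inner w m" by (simp_all add: inner_diff_right)
      thus ?thesis using a1 a2 a3' by argo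
    qed
  qed
  with K m have "norm (w - G m) < \<delta>" by blast
  moreover have "w - G m = (1/2) *\<^sub>R (w - y)" 
  proof -
    have "w = (1/2) *\<^sub>R w + (1/2) *\<^sub>R w" by (simp flip: scaleR_add_left)
    thus ?thesis unfolding m(2) p_def
      by (metis (no_types, lifting) add_diff_cancel_left add_diff_eq diff_add_eq scaleR_right_diff_distrib)
  qed
  ultimately have "norm ((1/2) *\<^sub>R (w - y)) < \<delta>" by simp
  thus ?thesis by (simp add: w_def norm_minus_commute)
qed

lemma approx:
  assumes L: "\<And>x. legendre (ext_ind N f) x = ereal (F x)"
    and h: "\<And>y. y \<in> N \<Longrightarrow> \<bar>h y - f y\<bar> \<le> \<epsilon>" and y0: "y0 \<in> N"
  shows "\<exists>r. legendre (ext_ind N h) x = ereal r \<and> \<bar>r - F x\<bar> \<le> \<epsilon>"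
proof -
  have up: "legendre (ext_ind N h) x \<le> ereal (F x + \<epsilon>)"
    unfolding legendre_def
  proof (rule SUP_least)
    fix y show "ereal (inner x y) - ext_ind N h y \<le> ereal (F x + \<epsilon>)"
    proof (cases "y \<in> N")
      case True
      have "inner x y - f y \<le> F x" by (rule leg_upper[OF L True])
      with h[OF True] show ?thesis using True by (simp add: ext_ind_def)
    qed (simp add: ext_ind_def)
  qed
  have lo: "ereal (inner x y - h y) \<le> legendre (ext_ind N h) x" if "y \<in> N" for y
  proof -
    have "ereal (inner x y) - ext_ind N h y \<le> legendre (ext_ind N h) x"
      unfolding legendre_def by (rule SUP_upper) simp
    with that show ?thesis by (simp add: ext_ind_def)
  qed
  obtain r where r: "legendre (ext_ind N h) x = ereal r"
    using up lo[OF y0] by (cases "legendre (ext_ind N h) x") auto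
  have "r \<le> F x + \<epsilon>" using up r by simp
  moreover have "F x \<le> r + \<epsilon>"
  proof (rule leg_least[OF L])
    fix y assume y: "y \<in> N"
    have "inner x y - h y \<le> r" using lo[OF y] r by simp
    with h[OF y] show "inner x y - f y \<le> r + \<epsilon>" by simp
  qed
  ultimately show ?thesis using r by (intro exI[of _ r]) auto
qed

theorem lemmaA1:
  fixes N :: "'a::euclidean_space set"
    and fn :: "nat \<Rightarrow> 'a \<Rightarrow> real" and f :: "'a \<Rightarrow> real"
    and F :: "'a \<Rightarrow> real" and G :: "'a \<Rightarrow> 'a" and M :: "'a set"
  assumes "compact N" and "convex N"
    and "\<And>n. convex_on N (fn n)" and "convex_on N f"
    and "\<And>x. legendre (ext_ind N f) x = ereal (F x)"
    and "\<And>x. (F has_derivative (\<lambda>h. inner (G x) h)) (at x)"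
    and "continuous_on UNIV G" and "\<And>x. G x \<in> N"
    and "compact M" and "G ` M = N"
    and "(\<lambda>n. SUP y\<in>N. ennreal \<bar>fn n y - f y\<bar>) \<longlonglongrightarrow> 0"
  shows "(\<lambda>n. SUP x. SUP y\<in>subdiff (legendre (ext_ind N (fn n))) x. ennreal (norm (y - G x)))
           \<longlonglongrightarrow> 0"
proof -
  note cN = assms(1) and cv = assms(2) and L = assms(5) and der = assms(6) and cG = assms(7)
    and GN = assms(8) and cM = assms(9) and GM = assms(10) and conv = assms(11)
  have cvx: "convex_on UNIV F" by (rule leg_convex[OF L])
  have MC: "eventually (\<lambda>n. \<forall>x. \<forall>y\<in>subdiff (legendre (ext_ind N (fn n))) x. norm (y - G x) < \<delta>) sequentially"
    if d: "\<delta> > 0" for \<delta>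
  proof -
    from K1[OF cvx der cG GN cN cM, of "\<delta>/2"] d obtain e where e: "e > 0"
      and K: "\<forall>m\<in>M. \<forall>u. esub F e m u \<longrightarrow> norm (u - G m) < \<delta>/2" by auto
    have "ennreal (e/2) > 0" using e by simp
    from order_tendstoD(2)[OF conv this]
    have ev: "eventually (\<lambda>n. (SUP y\<in>N. ennreal \<bar>fn n y - f y\<bar>) < ennreal (e/2)) sequentially" .
    show ?thesis
    proof (rule eventually_mono[OF ev], intro allI ballI)
      fix n x y
      assume S: "(SUP y\<in>N. ennreal \<bar>fn n y - f y\<bar>) < ennreal (e/2)"
        and y: "y \<in> subdiff (legendre (ext_ind N (fn n))) x"
      have h: "\<bar>fn n v - f v\<bar> \<le> e/2" if v: "v \<in> N" for v
      proof -
        have "ennreal \<bar>fn n v - f v\<bar> \<le> (SUP y\<in>N. ennreal \<bar>fn n y - f y\<bar>)"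
          using v by (rule SUP_upper)
        with S have "ennreal \<bar>fn n v - f v\<bar> < ennreal (e/2)" by simp
        thus ?thesis by (simp add: ennreal_less_iff)
      qed
      have "\<forall>z. \<exists>r. legendre (ext_ind N (fn n)) z = ereal r \<and> \<bar>r - F z\<bar> \<le> e/2"
        using approx[OF L h GN] by blast
      then obtain R where R: "\<And>z. legendre (ext_ind N (fn n)) z = ereal (R z)"
        "\<And>z. \<bar>R z - F z\<bar> \<le> e/2" by metis
      have es: "esub F e x y" unfolding esub_def
      proof
        fix z
        have "legendre (ext_ind N (fn n)) x + ereal (inner y (z - x)) \<le> legendre (ext_ind N (fn n)) z"
          using y by (simp add: subdiff_def)
        hence "R x + inner y (z - x) \<le> R z" by (simp add: R(1))
        thus "F x + inner y (z - x) - e \<le> F z" using R(2)[of x] R(2)[of z] by linarith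
      qed
      have yN: "y \<in> N" by (rule in_N[OF L cN cv es])
      from key[OF cvx der GM cv K es yN GN] show "norm (y - G x) < \<delta>" by simp
    qed
  qed
  show ?thesis
  proof (rule order_tendstoI)
    fix a :: ennreal assume "a < 0" thus "eventually (\<lambda>n. a < (SUP x. SUP y\<in>subdiff (legendre (ext_ind N (fn n))) x. ennreal (norm (y - G x)))) sequentially"
      by simp
  next
    fix a :: ennreal assume a: "0 < a"
    obtain c where c: "0 < c" "c < a" using dense[OF a] by blast
    define \<delta> where "\<delta> = enn2real c"
    have ct: "c < top" using c(2) top.extremum_strict[of a] by (metis top.not_eq_extremum less_top order.strict_trans)
    have d: "\<delta> > 0" using c(1) ct by (simp add: \<delta>_def enn2real_positive_iff)
    have cd: "c = ennreal \<delta>" using ct by (simp add: \<delta>_def)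
    show "eventually (\<lambda>n. (SUP x. SUP y\<in>subdiff (legendre (ext_ind N (fn n))) x. ennreal (norm (y - G x))) < a) sequentially"
    proof (rule eventually_mono[OF MC[OF d]])
      fix n assume H: "\<forall>x. \<forall>y\<in>subdiff (legendre (ext_ind N (fn n))) x. norm (y - G x) < \<delta>"
      have "(SUP x. SUP y\<in>subdiff (legendre (ext_ind N (fn n))) x. ennreal (norm (y - G x))) \<le> c"
        unfolding cd using H by (intro SUP_least ennreal_leI) (auto intro: less_imp_le)
      from this c(2) show "(SUP x. SUP y\<in>subdiff (legendre (ext_ind N (fn n))) x. ennreal (norm (y - G x))) < a"
        by (rule le_less_trans)
    qed
  qed
qed

end
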